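(* Consider the clique inference problem with nonnegative vertex potentials and the Potts clique potential $C(\mathbf{v})=\lambda\sum_{v\in V}n_v(\mathbf{v})^2$ with $\lambda>0$. Let $\hat{\mathbf{v}}$ be the assignment returned by the generalized $\alpha$-pass algorithm with parameter $q=2$, and let $\mathbf{v}^*$ maximize $F$. Then $F(\hat{\mathbf{v}})\ge\frac{8}{9}F(\mathbf{v}^* )$.
   Context: Clique inference problem: there are $n$ vertices $1,\dots,n$, a finite set $V$ of values, real vertex potentials $\psi_{jv}$ ($1\le j\le n$, $v\in V$), and a clique potential $C$ depending only on the counts $n_v(\mathbf{v})=|\{j:v_j=v\}|$; the objective is $F(\mathbf{v})=\sum_j\psi_{jv_j}+C(\mathbf{v})$ over $\mathbf{v}\in V^n$. Generalized $\alpha$-pass with parameter $q$: for each nonempty subset $A\subseteq V$ with $|A|\le q$ and each count $k\in\{1,\dots,n\}$, sort the vertices in decreasing order of $\max_{\alpha\in A}\psi_{i\alpha}-\max_{v\notin A}\psi_{iv}$, assign the top $k$ vertices their best value in $A$ (a value in $A$ maximizing $\psi_{iv}$) and the remaining vertices their best value not in $A$; output the best (largest $F$) of all these assignments over all $A$ and $k$. *)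

theory Defs
  imports Complex_Main
begin

text \<open>Clique inference. Vertices are 1..n, values form a finite set V, an
assignment is a function x :: nat \<Rightarrow> 'a whose values on {1..n} lie in V.\<close>

definition cnt :: "nat \<Rightarrow> (nat \<Rightarrow> 'a) \<Rightarrow> 'a \<Rightarrow> nat" where
  "cnt n x v = card {j \<in> {1..n}. x j = v}"

definition potts_F :: "(nat \<Rightarrow> 'a \<Rightarrow> real) \<Rightarrow> real \<Rightarrow> 'a set \<Rightarrow> nat \<Rightarrow> (nat \<Rightarrow> 'a) \<Rightarrow> real" where
  "potts_F psi lam V n x = (\<Sum>j=1..n. psi j (x j)) + lam * (\<Sum>v\<in>V. (real (cnt n x v))^2)"

definition margin :: "(nat \<Rightarrow> 'a \<Rightarrow> real) \<Rightarrow> 'a set \<Rightarrow> 'a set \<Rightarrow> nat \<Rightarrow> real" where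
  "margin psi V A i = Max (psi i ` A) - Max (psi i ` (V - A))"

text \<open>x is an assignment the generalized alpha-pass may produce for the pair (A,k):
the top k vertices w.r.t. the margin (any tie-breaking) get a best value in A, the
others a best value outside A.  If A = V (no value outside A, margin = +infinity
for every vertex), every vertex gets its best value in A.\<close>
definition alpha_cand ::
  "(nat \<Rightarrow> 'a \<Rightarrow> real) \<Rightarrow> 'a set \<Rightarrow> nat \<Rightarrow> 'a set \<Rightarrow> nat \<Rightarrow> (nat \<Rightarrow> 'a) \<Rightarrow> bool" where
  "alpha_cand psi V n A k x \<longleftrightarrow>
     (if A = V then
        (\<forall>i\<in>{1..n}. x i \<in> A \<and> psi i (x i) = Max (psi i ` A))
      else
        (\<exists>S \<subseteq> {1..n}. card S = k \<and>
           (\<forall>i\<in>S. \<forall>j\<in>{1..n} - S. margin psi V A j \<le> margin psi V A i) \<and>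
           (\<forall>i\<in>S. x i \<in> A \<and> psi i (x i) = Max (psi i ` A)) \<and>
           (\<forall>i\<in>{1..n} - S. x i \<in> V - A \<and> psi i (x i) = Max (psi i ` (V - A)))))"

definition valid_pair :: "nat \<Rightarrow> 'a set \<Rightarrow> nat \<Rightarrow> 'a set \<Rightarrow> nat \<Rightarrow> bool" where
  "valid_pair q V n A k \<longleftrightarrow> A \<subseteq> V \<and> A \<noteq> {} \<and> card A \<le> q \<and> k \<in> {1..n}"

text \<open>vhat is a possible output of the generalized alpha-pass with parameter q:
for some choice (tie-breaking) of one candidate cand A k per valid pair (A,k),
vhat is one of the chosen candidates with the largest objective.\<close>
definition alpha_pass_output ::
  "nat \<Rightarrow> (nat \<Rightarrow> 'a \<Rightarrow> real) \<Rightarrow> real \<Rightarrow> 'a set \<Rightarrow> nat \<Rightarrow> (nat \<Rightarrow> 'a) \<Rightarrow> bool" where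
  "alpha_pass_output q psi lam V n vhat \<longleftrightarrow>
     (\<exists>cand. (\<forall>A k. valid_pair q V n A k \<longrightarrow> alpha_cand psi V n A k (cand A k)) \<and>
        (\<exists>A k. valid_pair q V n A k \<and> vhat = cand A k) \<and>
        (\<forall>A k. valid_pair q V n A k \<longrightarrow> potts_F psi lam V n (cand A k) \<le> potts_F psi lam V n vhat))"

end

theory Submission
  imports Defs
begin

lemma cnt_sum:
  assumes "finite A"
  shows "(\<Sum>v\<in>A. cnt n x v) = card {j\<in>{1..n}. x j \<in> A}"
  using assms
proof (induction A rule: finite_induct)
  case empty
  then show ?case by simp
next
  case (insert a A)
  have e: "{j\<in>{1..n}. x j \<in> insert a A} = {j\<in>{1..n}. x j = a} \<union> {j\<in>{1..n}. x j \<in> A}"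
    by auto
  have d: "{j\<in>{1..n}. x j = a} \<inter> {j\<in>{1..n}. x j \<in> A} = {}" using insert by auto
  have "card {j\<in>{1..n}. x j \<in> insert a A} = card {j\<in>{1..n}. x j = a} + card {j\<in>{1..n}. x j \<in> A}"
    unfolding e by (rule card_Un_disjoint) (use d in auto)
  then show ?case using insert by (simp add: cnt_def)
qed

lemma cand_range:
  assumes "alpha_cand psi V n A k x" "A \<subseteq> V"
  shows "\<forall>i\<in>{1..n}. x i \<in> V"
  using assms unfolding alpha_cand_def by (auto split: if_splits)

lemma cand_count:
  assumes "alpha_cand psi V n A k x" "k \<le> n"
  shows "k \<le> card {j\<in>{1..n}. x j \<in> A}"
proof (cases "A = V")
  case True
  then have "{j\<in>{1..n}. x j \<in> A} = {1..n}" using assms(1) unfolding alpha_cand_def by auto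
  then show ?thesis using assms(2) by simp
next
  case False
  have "\<exists>S \<subseteq> {1..n}. card S = k \<and> (\<forall>i\<in>S. x i \<in> A)"
    using assms(1) False unfolding alpha_cand_def by (simp only: if_False) blast
  then obtain S where S: "S \<subseteq> {1..n}" "card S = k" "\<forall>i\<in>S. x i \<in> A"
    by blast
  then have "S \<subseteq> {j\<in>{1..n}. x j \<in> A}" by auto
  then have "card S \<le> card {j\<in>{1..n}. x j \<in> A}" by (rule card_mono[rotated]) auto
  then show ?thesis using S by simp
qed

lemma exch:
  fixes f :: "nat \<Rightarrow> real"
  assumes "finite I" "S \<subseteq> I" "S' \<subseteq> I" "card S = card S'"
    and "\<forall>i\<in>S. \<forall>j\<in>I-S. f j \<le> f i"
  shows "sum f S' \<le> sum f S"
proof -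
  have fS: "finite S" "finite S'" using finite_subset[OF assms(2,1)] finite_subset[OF assms(3,1)] by auto
  have s1: "sum f S = sum f (S \<inter> S') + sum f (S - S')"
    using fS by (metis Int_Diff_disjoint Int_Diff_Un finite_Diff finite_Int sum.union_disjoint)
  have s2: "sum f S' = sum f (S \<inter> S') + sum f (S' - S)"
    using fS by (metis Int_Diff_disjoint Int_Diff_Un finite_Diff finite_Int sum.union_disjoint inf_commute)
  have c1: "card S = card (S \<inter> S') + card (S - S')"
    using fS by (metis card_Int_Diff)
  have c2: "card S' = card (S \<inter> S') + card (S' - S)"
    using fS by (metis card_Int_Diff inf_commute)
  have cc: "card (S - S') = card (S' - S)" using c1 c2 assms(4) by simp
  have "sum f (S' - S) \<le> sum f (S - S')"
  proof (cases "S - S' = {}")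
    case True
    then have "card (S' - S) = 0" using cc by (metis card.empty)
    then have "S' - S = {}" using fS by simp
    then show ?thesis using True by simp
  next
    case False
    define c where "c = Min (f ` (S - S'))"
    have fin: "finite (S - S')" using fS by simp
    have cin: "c \<in> f ` (S - S')" unfolding c_def using fin False by (intro Min_in) auto
    then obtain i0 where i0: "i0 \<in> S - S'" "c = f i0" by auto
    have lo: "of_nat (card (S - S')) * c \<le> sum f (S - S')"
      by (rule sum_bounded_below) (use fin in \<open>auto simp: c_def\<close>)
    have "\<forall>j\<in>S' - S. f j \<le> c" using i0 assms(3,5) by auto
    then have hi: "sum f (S' - S) \<le> of_nat (card (S' - S)) * c"
      by (intro sum_bounded_above) auto
    show ?thesis using lo hi cc by simp
  qed
  then show ?thesis using s1 s2 by simp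
qed

lemma cand_vertex:
  assumes "finite V" "A \<subseteq> V" "A \<noteq> {}" "alpha_cand psi V n A k x"
    and "\<forall>j\<in>{1..n}. y j \<in> V"
    and "A \<noteq> V \<longrightarrow> card {j\<in>{1..n}. y j \<in> A} = k"
  shows "(\<Sum>j=1..n. psi j (y j)) \<le> (\<Sum>j=1..n. psi j (x j))"
proof (cases "A = V")
  case True
  then have x: "\<forall>i\<in>{1..n}. psi i (x i) = Max (psi i ` V)" using assms(4) unfolding alpha_cand_def by auto
  show ?thesis
  proof (rule sum_mono)
    fix j assume "j \<in> {1..n}"
    then show "psi j (y j) \<le> psi j (x j)" using x assms(1,5) by auto
  qed
next
  case False
  define MA where "MA j = Max (psi j ` A)" for j
  define MN where "MN j = Max (psi j ` (V - A))" for j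
  define I where "I = {1..n::nat}"
  obtain S where S: "S \<subseteq> I" "card S = k"
    "\<forall>i\<in>S. \<forall>j\<in>I - S. margin psi V A j \<le> margin psi V A i"
    "\<forall>i\<in>S. x i \<in> A \<and> psi i (x i) = MA i"
    "\<forall>i\<in>I - S. x i \<in> V - A \<and> psi i (x i) = MN i"
    using assms(4) False unfolding alpha_cand_def MA_def MN_def I_def by auto
  define S' where "S' = {j\<in>I. y j \<in> A}"
  have fA: "finite A" "finite (V - A)" using assms(1,2) finite_subset by auto
  have g: "(\<Sum>j\<in>I. if j \<in> T then MA j else MN j) = sum MN I + sum (margin psi V A) T"
    if "T \<subseteq> I" for T
  proof -
    have "(\<Sum>j\<in>I. if j \<in> T then MA j else MN j) = (\<Sum>j\<in>I. MN j + (if j \<in> T then margin psi V A j else 0))"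
      by (rule sum.cong) (auto simp: margin_def MA_def MN_def)
    also have "\<dots> = sum MN I + (\<Sum>j\<in>I. if j \<in> T then margin psi V A j else 0)"
      by (simp add: sum.distrib)
    also have "(\<Sum>j\<in>I. if j \<in> T then margin psi V A j else 0) = sum (margin psi V A) (I \<inter> T)"
      by (simp add: sum.inter_restrict I_def)
    also have "I \<inter> T = T" using that by auto
    finally show ?thesis .
  qed
  have y: "(\<Sum>j\<in>I. psi j (y j)) \<le> (\<Sum>j\<in>I. if j \<in> S' then MA j else MN j)"
  proof (rule sum_mono)
    fix j assume j: "j \<in> I"
    show "psi j (y j) \<le> (if j \<in> S' then MA j else MN j)"
    proof (cases "y j \<in> A")
      case True
      then show ?thesis using j fA unfolding S'_def MA_def by auto
    next
      case False
      then have "y j \<in> V - A" using j assms(5) I_def by auto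
      then show ?thesis using j fA False unfolding S'_def MN_def by auto
    qed
  qed
  have x: "(\<Sum>j\<in>I. psi j (x j)) = (\<Sum>j\<in>I. if j \<in> S then MA j else MN j)"
    by (rule sum.cong) (use S in auto)
  have "sum (margin psi V A) S' \<le> sum (margin psi V A) S"
    by (rule exch) (use S assms(6) False in \<open>auto simp: S'_def I_def\<close>)
  then have "(\<Sum>j\<in>I. psi j (y j)) \<le> (\<Sum>j\<in>I. psi j (x j))"
    using y x g[of S] g[of S'] S(1) unfolding S'_def by auto
  then show ?thesis unfolding I_def .
qed

theorem theorem7:
  fixes psi :: "nat \<Rightarrow> 'a \<Rightarrow> real" and lam :: real and V :: "'a set" and n :: nat
    and vhat vstar :: "nat \<Rightarrow> 'a"
  assumes "finite V" and "V \<noteq> {}" and "lam > 0"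
    and "\<forall>j\<in>{1..n}. \<forall>v\<in>V. psi j v \<ge> 0"
    and "alpha_pass_output 2 psi lam V n vhat"
    and "\<forall>j\<in>{1..n}. vstar j \<in> V"
    and "\<forall>x. (\<forall>j\<in>{1..n}. x j \<in> V) \<longrightarrow> potts_F psi lam V n x \<le> potts_F psi lam V n vstar"
  shows "potts_F psi lam V n vhat \<ge> 8 / 9 * potts_F psi lam V n vstar"
proof -
  let ?F = "potts_F psi lam V n"
  from assms(5) obtain cand where
    c1: "\<forall>A k. valid_pair 2 V n A k \<longrightarrow> alpha_cand psi V n A k (cand A k)" and
    c2: "\<exists>A k. valid_pair 2 V n A k \<and> vhat = cand A k" and
    c3: "\<forall>A k. valid_pair 2 V n A k \<longrightarrow> ?F (cand A k) \<le> ?F vhat"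
    unfolding alpha_pass_output_def by blast
  from c2 have n1: "n \<ge> 1" unfolding valid_pair_def by auto
  define c where "c = cnt n vstar"
  define ps where "ps = (\<Sum>j=1..n. psi j (vstar j))"
  have Fstar: "?F vstar = ps + lam * (\<Sum>v\<in>V. (real (c v))^2)"
    unfolding potts_F_def ps_def c_def by simp
  have "(\<Sum>v\<in>V. c v) = card {j\<in>{1..n}. vstar j \<in> V}"
    unfolding c_def by (rule cnt_sum[OF assms(1)])
  also have "{j\<in>{1..n}. vstar j \<in> V} = {1..n}" using assms(6) by auto
  finally have sumc: "(\<Sum>v\<in>V. c v) = n" by simp
  obtain \<alpha> where al: "\<alpha> \<in> V" "\<forall>v\<in>V. c v \<le> c \<alpha>"
  proof -
    have "Max (c ` V) \<in> c ` V" using assms(1,2) by (intro Max_in) auto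
    then obtain a where "a \<in> V" "c a = Max (c ` V)" by auto
    then show ?thesis using that assms(1) by auto
  qed
  have "1 \<le> c (vstar 1)"
  proof -
    have "1 \<in> {j\<in>{1..n}. vstar j = vstar 1}" using n1 by auto
    then have "{j\<in>{1..n}. vstar j = vstar 1} \<noteq> {}" by blast
    then show ?thesis unfolding c_def cnt_def by (simp add: Suc_le_eq card_gt_0_iff)
  qed
  moreover have "vstar 1 \<in> V" using assms(6) n1 by auto
  ultimately have ca1: "1 \<le> c \<alpha>" using al by fastforce
  have cle: "c v \<le> n" for v
  proof -
    have "c v \<le> card {1..n}" unfolding c_def cnt_def by (rule card_mono) auto
    then show ?thesis by simp
  qed
  have psi0: "0 \<le> (\<Sum>j=1..n. psi j (x j))" if "\<forall>j\<in>{1..n}. x j \<in> V" for x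
    using that assms(4) by (intro sum_nonneg) auto
  have Fx: "?F x = (\<Sum>j=1..n. psi j (x j)) + lam * (\<Sum>v\<in>V. (real (cnt n x v))^2)" for x
    unfolding potts_F_def by simp
  have sq_ge: "real (cnt n x a)^2 \<le> (\<Sum>v\<in>V. (real (cnt n x v))^2)" if "a \<in> V" for x a
    using that assms(1) by (intro member_le_sum) auto
  have cnt1: "cnt n x a = card {j\<in>{1..n}. x j \<in> {a}}" for x a
    unfolding cnt_def by simp
  have v1: "valid_pair 2 V n {\<alpha>} (c \<alpha>)" using al ca1 cle unfolding valid_pair_def by auto
  define x1 where "x1 = cand {\<alpha>} (c \<alpha>)"
  have ac1: "alpha_cand psi V n {\<alpha>} (c \<alpha>) x1" using c1 v1 unfolding x1_def by blast
  have "ps \<le> (\<Sum>j=1..n. psi j (x1 j))" unfolding ps_def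
    by (rule cand_vertex[OF assms(1) _ _ ac1 assms(6)]) (use al in \<open>auto simp: c_def cnt_def\<close>)
  moreover have "c \<alpha> \<le> cnt n x1 \<alpha>" using cand_count[OF ac1 cle] by (simp add: cnt_def)
  then have "real (c \<alpha>)^2 \<le> (\<Sum>v\<in>V. (real (cnt n x1 v))^2)"
    using sq_ge[OF al(1), of x1] by (smt (verit) of_nat_0_le_iff of_nat_mono power_mono)
  ultimately have "ps + lam * real (c \<alpha>)^2 \<le> ?F x1" unfolding Fx
    using assms(3) by (smt (verit) mult_left_mono)
  then have B1: "ps + lam * real (c \<alpha>)^2 \<le> ?F vhat" using c3 v1 unfolding x1_def by fastforce
  have v2: "valid_pair 2 V n {\<alpha>} n" using al n1 unfolding valid_pair_def by auto
  define x2 where "x2 = cand {\<alpha>} n"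
  have ac2: "alpha_cand psi V n {\<alpha>} n x2" using c1 v2 unfolding x2_def by blast
  have "0 \<le> (\<Sum>j=1..n. psi j (x2 j))" using psi0 cand_range[OF ac2] al by auto
  moreover have "n \<le> cnt n x2 \<alpha>" using cand_count[OF ac2] by (simp add: cnt_def)
  then have "real n^2 \<le> (\<Sum>v\<in>V. (real (cnt n x2 v))^2)"
    using sq_ge[OF al(1), of x2] by (smt (verit) of_nat_0_le_iff of_nat_mono power_mono)
  ultimately have "lam * real n^2 \<le> ?F x2" unfolding Fx
    using assms(3) by (smt (verit) mult_left_mono)
  then have B2: "lam * real n^2 \<le> ?F vhat" using c3 v2 unfolding x2_def by fastforce
  have split: "(\<Sum>v\<in>V. (real (c v))^2) = real (c \<alpha>)^2 + (\<Sum>v\<in>V-{\<alpha>}. (real (c v))^2)"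
    using assms(1) al(1) by (simp add: sum.remove)
  have rest: "(\<Sum>v\<in>V-{\<alpha>}. real (c v)) = real n - real (c \<alpha>)"
  proof -
    have "(\<Sum>v\<in>V. real (c v)) = real n" using sumc by (metis of_nat_sum)
    then show ?thesis using assms(1) al(1) by (simp add: sum.remove)
  qed
  have bnd: "(\<Sum>v\<in>V-{\<alpha>}. (real (c v))^2) \<le> real n * m - real (c \<alpha>) * m"
    if "\<forall>v\<in>V-{\<alpha>}. real (c v) \<le> m" for m
  proof -
    have "(\<Sum>v\<in>V-{\<alpha>}. (real (c v))^2) \<le> (\<Sum>v\<in>V-{\<alpha>}. real (c v) * m)"
      using that by (intro sum_mono) (simp add: power2_eq_square mult_left_mono)
    also have "\<dots> = (\<Sum>v\<in>V-{\<alpha>}. real (c v)) * m" by (simp add: sum_distrib_right)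
    also have "\<dots> = (real n - real (c \<alpha>)) * m" using rest by simp
    finally show ?thesis by (simp add: algebra_simps)
  qed
  show ?thesis
  proof (cases "\<exists>b\<in>V-{\<alpha>}. real (c \<alpha>) < 2 * real (c b)")
    case False
    let ?m = "real (c \<alpha>) / 2"
    have "(\<Sum>v\<in>V-{\<alpha>}. (real (c v))^2) \<le> real n * ?m - real (c \<alpha>) * ?m"
      using False by (intro bnd) force
    then have s: "(\<Sum>v\<in>V. (real (c v))^2) \<le> real (c \<alpha>)^2 + real n * ?m - real (c \<alpha>) * ?m"
      using split by simp
    have key: "8 * (\<Sum>v\<in>V. (real (c v))^2) \<le> 8 * real (c \<alpha>)^2 + real n^2"
    proof -
      have "0 \<le> (real n - 2 * real (c \<alpha>))^2" by simp
      then show ?thesis using s by (simp add: power2_eq_square algebra_simps)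
    qed
    have "9 * ?F vhat \<ge> 8 * (ps + lam * real (c \<alpha>)^2) + lam * real n^2" using B1 B2 by simp
    moreover have "lam * (8 * (\<Sum>v\<in>V. (real (c v))^2)) \<le> lam * (8 * real (c \<alpha>)^2 + real n^2)"
      using key assms(3) by (intro mult_left_mono) auto
    ultimately show ?thesis unfolding Fstar by (simp add: algebra_simps)
  next
    case True
    define V' where "V' = V - {\<alpha>}"
    have fV': "finite V'" "V' \<noteq> {}" using True assms(1) unfolding V'_def by auto
    obtain \<beta> where be: "\<beta> \<in> V'" "\<forall>v\<in>V'. c v \<le> c \<beta>"
    proof -
      have "Max (c ` V') \<in> c ` V'" using fV' by (intro Max_in) auto
      then obtain a where "a \<in> V'" "c a = Max (c ` V')" by auto
      then show ?thesis using that fV' by auto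
    qed
    have bV: "\<beta> \<in> V" "\<beta> \<noteq> \<alpha>" using be unfolding V'_def by auto
    have cb: "real (c \<alpha>) < 2 * real (c \<beta>)" using True be unfolding V'_def by force
    have cab: "c \<beta> \<le> c \<alpha>" using al bV by auto
    have ab_card: "c \<alpha> + c \<beta> = card {j\<in>{1..n}. vstar j \<in> {\<alpha>, \<beta>}}"
      using cnt_sum[of "{\<alpha>, \<beta>}" n vstar] bV unfolding c_def by simp
    have "card {j\<in>{1..n}. vstar j \<in> {\<alpha>, \<beta>}} \<le> card {1..n}" by (rule card_mono) auto
    then have abn: "c \<alpha> + c \<beta> \<le> n" using ab_card by simp
    have v3: "valid_pair 2 V n {\<alpha>, \<beta>} (c \<alpha> + c \<beta>)"
      using al bV ca1 abn unfolding valid_pair_def by auto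
    define x3 where "x3 = cand {\<alpha>, \<beta>} (c \<alpha> + c \<beta>)"
    have ac3: "alpha_cand psi V n {\<alpha>, \<beta>} (c \<alpha> + c \<beta>) x3" using c1 v3 unfolding x3_def by blast
    have "ps \<le> (\<Sum>j=1..n. psi j (x3 j))" unfolding ps_def
      by (rule cand_vertex[OF assms(1) _ _ ac3 assms(6)]) (use al bV ab_card in auto)
    moreover have "c \<alpha> + c \<beta> \<le> cnt n x3 \<alpha> + cnt n x3 \<beta>"
      using cand_count[OF ac3 abn] cnt_sum[of "{\<alpha>, \<beta>}" n x3] bV by simp
    then have "(real (c \<alpha>) + real (c \<beta>))^2 / 2 \<le> real (cnt n x3 \<alpha>)^2 + real (cnt n x3 \<beta>)^2"
    proof -
      assume h: "c \<alpha> + c \<beta> \<le> cnt n x3 \<alpha> + cnt n x3 \<beta>"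
      define p where "p = real (cnt n x3 \<alpha>)"
      define q where "q = real (cnt n x3 \<beta>)"
      have h': "real (c \<alpha>) + real (c \<beta>) \<le> p + q" using h unfolding p_def q_def
        by (metis of_nat_add of_nat_mono)
      have "(real (c \<alpha>) + real (c \<beta>))^2 \<le> (p + q)^2" using h' by (intro power_mono) auto
      also have "(p+q)^2 \<le> 2 * (p^2 + q^2)" using sum_squares_ge_zero[of "p - q" 0]
        by (simp add: power2_eq_square algebra_simps)
      finally show ?thesis unfolding p_def q_def by simp
    qed
    moreover have "real (cnt n x3 \<alpha>)^2 + real (cnt n x3 \<beta>)^2 \<le> (\<Sum>v\<in>V. (real (cnt n x3 v))^2)"
    proof -
      have "(\<Sum>v\<in>{\<alpha>,\<beta>}. (real (cnt n x3 v))^2) \<le> (\<Sum>v\<in>V. (real (cnt n x3 v))^2)"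
        using assms(1) al bV by (intro sum_mono2) auto
      then show ?thesis using bV by simp
    qed
    ultimately have "ps + lam * ((real (c \<alpha>) + real (c \<beta>))^2 / 2) \<le> ?F x3" unfolding Fx
      using assms(3) by (smt (verit) mult_left_mono)
    then have B3: "ps + lam * ((real (c \<alpha>) + real (c \<beta>))^2 / 2) \<le> ?F vhat"
      using c3 v3 unfolding x3_def by fastforce
    have "(\<Sum>v\<in>V-{\<alpha>}. (real (c v))^2) \<le> real n * real (c \<beta>) - real (c \<alpha>) * real (c \<beta>)"
      using be unfolding V'_def by (intro bnd) auto
    then have s: "(\<Sum>v\<in>V. (real (c v))^2) \<le> real (c \<alpha>)^2 + real n * real (c \<beta>) - real (c \<alpha>) * real (c \<beta>)"
      using split by simp
    have key: "8 * (\<Sum>v\<in>V. (real (c v))^2) \<le> 4 * (real (c \<alpha>) + real (c \<beta>))^2 + real n^2"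
    proof -
      define a where "a = real (c \<alpha>)"
      define b where "b = real (c \<beta>)"
      define N where "N = real n"
      have "0 \<le> (a - b) * (3 * b - a)" using cb cab unfolding a_def b_def
        by (intro mult_nonneg_nonneg) (auto simp: of_nat_mono)
      moreover have "0 \<le> (N - 4 * b)^2" by simp
      moreover have "4 * (a + b)^2 + N^2 - 8 * (a^2 + N * b - a * b) = (N - 4*b)^2 + 4 * ((a - b) * (3*b - a))"
        by (simp add: power2_eq_square algebra_simps)
      ultimately have "8 * (a^2 + N * b - a * b) \<le> 4 * (a + b)^2 + N^2" by linarith
      then have "8 * (real (c \<alpha>)^2 + real n * real (c \<beta>) - real (c \<alpha>) * real (c \<beta>)) \<le> 4 * (real (c \<alpha>) + real (c \<beta>))^2 + real n^2"
        unfolding a_def b_def N_def .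
      moreover have "8 * (\<Sum>v\<in>V. (real (c v))^2) \<le> 8 * (real (c \<alpha>)^2 + real n * real (c \<beta>) - real (c \<alpha>) * real (c \<beta>))"
        using s by simp
      ultimately show ?thesis by (rule order_trans[rotated])
    qed
    have "9 * ?F vhat \<ge> 8 * (ps + lam * ((real (c \<alpha>) + real (c \<beta>))^2 / 2)) + lam * real n^2"
      using B3 B2 by simp
    moreover have "lam * (8 * (\<Sum>v\<in>V. (real (c v))^2)) \<le> lam * (4 * (real (c \<alpha>) + real (c \<beta>))^2 + real n^2)"
      using key assms(3) by (intro mult_left_mono) auto
    ultimately show ?thesis unfolding Fstar by (simp add: algebra_simps)
  qed
qed

end
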